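(* Let $M,M'\in\mathrm{GL}(2,\mathbb{Z})$ be hyperbolic (no eigenvalue on the unit circle) and suppose they have the same fixed point counts, i.e. $a_m(M)=a_m(M')$ for all $m\in\mathbb{N}$, where $a_m(M)=\#\{x\in\mathbb{T}^2: M^m x=x\ (\mathrm{mod}\ 1)\}$. Then $\zeta_M(t)=\zeta_{M'}(t)$, where $\zeta_M(t)=\exp\big(\sum_{m\ge1}\frac{a_m(M)}{m}t^m\big)$. This implies $\det(M')=\det(M)$ and either $\mathrm{trace}(M')=\mathrm{trace}(M)$, or $\mathrm{trace}(M')=-\mathrm{trace}(M)$ together with $\det(M)=-1$.
   Context: $\mathbb{T}^2=\mathbb{R}^2/\mathbb{Z}^2$, with integer matrices acting by matrix multiplication mod $1$. *)

theory Defs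
  imports "HOL-Analysis.Analysis"
begin

primrec matpow :: "'a::semiring_1^'n^'n \<Rightarrow> nat \<Rightarrow> 'a^'n^'n" where
  "matpow A 0 = mat 1"
| "matpow A (Suc k) = A ** matpow A k"

definition GL2Z :: "int^2^2 \<Rightarrow> bool" where
  "GL2Z M \<longleftrightarrow> det M = 1 \<or> det M = -1"

definition hyperbolic :: "int^2^2 \<Rightarrow> bool" where
  "hyperbolic M \<longleftrightarrow>
     (\<forall>z::complex. det (mat z - map_matrix of_int M) = 0 \<longrightarrow> cmod z \<noteq> 1)"

text \<open>Points of the torus R^2/Z^2 are represented by their unique
  representatives in [0,1)^2; x is fixed by M^m mod 1 iff M^m x - x is integral.\<close>
definition torus_fixed_points :: "int^2^2 \<Rightarrow> nat \<Rightarrow> (real^2) set" where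
  "torus_fixed_points M m =
     {x::real^2. (\<forall>i. 0 \<le> x $ i \<and> x $ i < 1) \<and>
                 (\<forall>i. (map_matrix of_int (matpow M m) *v x - x) $ i \<in> \<int>)}"

definition fixcount :: "int^2^2 \<Rightarrow> nat \<Rightarrow> nat" where
  "fixcount M m = card (torus_fixed_points M m)"

definition zeta :: "int^2^2 \<Rightarrow> complex \<Rightarrow> complex" where
  "zeta M t = exp (\<Sum>k. of_nat (fixcount M (Suc k)) / of_nat (Suc k) * t ^ Suc k)"

end

theory Submission
  imports Defs
begin

definition Kp :: "int \<Rightarrow> int \<Rightarrow> int \<Rightarrow> int \<Rightarrow> (real\<times>real) set" where
"Kp a b c d = {(x,y). 0 \<le> x \<and> x < 1 \<and> 0 \<le> y \<and> y < 1 \<and>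
   of_int a * x + of_int b * y \<in> \<int> \<and> of_int c * x + of_int d * y \<in> \<int>}"
lemma fiber_card:
  assumes "a > 0"
  shows "card {x::real. 0 \<le> x \<and> x < 1 \<and> of_int a * x + r \<in> \<int>} = nat a"
proof -
  let ?f = "\<lambda>n::int. (of_int n - r) / of_int a"
  have "{x::real. 0 \<le> x \<and> x < 1 \<and> of_int a * x + r \<in> \<int>} = ?f ` {\<lceil>r\<rceil>..<\<lceil>r\<rceil>+a}"
  proof (intro equalityI subsetI)
    fix x assume "x \<in> {x::real. 0 \<le> x \<and> x < 1 \<and> of_int a * x + r \<in> \<int>}"
    then have x: "0 \<le> x" "x < 1" "of_int a * x + r \<in> \<int>" by auto
    then obtain n where n: "of_int a * x + r = of_int n" by (metis Ints_cases)
    have xe: "x = ?f n" using n assms by (simp add: field_simps)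
    have "r \<le> of_int n" using n x(1) assms by (smt (verit) mult_nonneg_nonneg of_int_pos)
    then have "\<lceil>r\<rceil> \<le> n" by (simp add: ceiling_le)
    moreover have "of_int n < r + of_int a" using n x(2) assms by (smt (verit) mult_less_cancel_left2 of_int_pos)
    then have "n < \<lceil>r\<rceil> + a" by (smt (verit) le_of_int_ceiling of_int_less_iff of_int_add)
    ultimately show "x \<in> ?f ` {\<lceil>r\<rceil>..<\<lceil>r\<rceil>+a}" using xe by auto
  next
    fix x assume "x \<in> ?f ` {\<lceil>r\<rceil>..<\<lceil>r\<rceil>+a}"
    then obtain n where n: "\<lceil>r\<rceil> \<le> n" "n < \<lceil>r\<rceil>+a" and xe: "x = ?f n" by auto
    have "r \<le> of_int n" using n(1) le_of_int_ceiling by (smt (verit) of_int_le_iff)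
    moreover have "of_int n < r + of_int a"
    proof -
      have "n \<le> \<lceil>r\<rceil> + a - 1" using n(2) by simp
      then have "of_int n \<le> of_int \<lceil>r\<rceil> + of_int a - (1::real)" by (metis of_int_le_iff of_int_add of_int_diff of_int_1)
      moreover have "of_int \<lceil>r\<rceil> < r + 1" by linarith
      ultimately show ?thesis by linarith
    qed
    moreover have "of_int a * x + r = of_int n" using xe assms by (simp add: field_simps)
    moreover have "(0::real) < of_int a" using assms by simp
    ultimately have "0 \<le> x" "x < 1" "of_int a * x + r \<in> \<int>"
      using xe by (auto simp: divide_less_eq_1_pos)
    then show "x \<in> {x::real. 0 \<le> x \<and> x < 1 \<and> of_int a * x + r \<in> \<int>}" by simp
  qed
  moreover have "inj_on ?f {\<lceil>r\<rceil>..<\<lceil>r\<rceil>+a}" using assms by (auto simp: inj_on_def field_simps)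
  ultimately show ?thesis by (simp add: card_image)
qed

lemma Kp_swap: "Kp a b c d = Kp c d a b"
  unfolding Kp_def by (intro set_eqI) (simp add: conj_ac split: prod.splits)
lemma Ints_neg_iff: "(- (z::real)) \<in> \<int> \<longleftrightarrow> z \<in> \<int>"
  by (metis Ints_minus minus_minus)
lemma Kp_neg1: "Kp a b c d = Kp (-a) (-b) c d"
proof -
  have "\<And>x y. of_int (-a) * x + of_int (-b) * y = - (of_int a * x + of_int b * y :: real)" by simp
  then show ?thesis unfolding Kp_def by (simp only: Ints_neg_iff)
qed
lemma Kp_add1: "Kp a b c d = Kp (a + k*c) (b + k*d) c d"
proof -
  have e: "\<And>x y. of_int (a + k*c) * x + of_int (b + k*d) * y
      = (of_int a * x + of_int b * y :: real) + of_int k * (of_int c * x + of_int d * y)"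
    by (simp add: algebra_simps)
  have "\<And>u v::real. v \<in> \<int> \<Longrightarrow> (u + of_int k * v \<in> \<int>) = (u \<in> \<int>)"
  proof -
    fix u v :: real assume v: "v \<in> \<int>"
    have kv: "of_int k * v \<in> \<int>" using v by (simp add: Ints_mult)
    show "(u + of_int k * v \<in> \<int>) = (u \<in> \<int>)"
    proof
      assume "u + of_int k * v \<in> \<int>"
      then have "(u + of_int k * v) - of_int k * v \<in> \<int>" using kv by (rule Ints_diff)
      then show "u \<in> \<int>" by simp
    next
      assume "u \<in> \<int>" then show "u + of_int k * v \<in> \<int>" using kv by (rule Ints_add)
    qed
  qed
  then show ?thesis unfolding Kp_def e by (intro set_eqI) (auto split: prod.splits)
qed

lemma Kp_add2: "Kp a b c d = Kp a b (c + k*a) (d + k*b)"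
proof -
  have "Kp a b c d = Kp c d a b" by (rule Kp_swap)
  also have "\<dots> = Kp (c + k*a) (d + k*b) a b" by (rule Kp_add1)
  also have "\<dots> = Kp a b (c + k*a) (d + k*b)" by (rule Kp_swap)
  finally show ?thesis .
qed


lemma Kp_tri:
  assumes "a > 0" "d > 0"
  shows "card (Kp a 0 c d) = nat (a*d)"
proof -
  define X where "X = {x::real. 0 \<le> x \<and> x < 1 \<and> of_int a * x + 0 \<in> \<int>}"
  define Y where "Y = (\<lambda>x. {y::real. 0 \<le> y \<and> y < 1 \<and> of_int d * y + of_int c * x \<in> \<int>})"
  have eq: "Kp a 0 c d = Sigma X Y" unfolding Kp_def X_def Y_def by (intro set_eqI) (auto simp: add.commute split: prod.splits)
  have cX: "card X = nat a" unfolding X_def using fiber_card[OF assms(1)] by blast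
  have cY: "\<And>x. card (Y x) = nat d" unfolding Y_def using fiber_card[OF assms(2)] by blast
  have fX: "finite X" using cX assms(1) by (metis card_ge_0_finite zero_less_nat_eq)
  have fY: "\<And>x. finite (Y x)" using cY assms(2) by (metis card_ge_0_finite zero_less_nat_eq)
  have "card (Sigma X Y) = (\<Sum>x\<in>X. card (Y x))" using fX fY by simp
  also have "\<dots> = nat a * nat d" using cX cY by simp
  finally show ?thesis using eq assms by (simp add: nat_mult_distrib)
qed

lemma Kp_base:
  assumes "a \<noteq> 0" "d \<noteq> 0"
  shows "card (Kp a 0 c d) = nat \<bar>a*d\<bar>"
proof -
  have n1: "Kp a 0 c d = Kp (-a) 0 c d" using Kp_neg1[of a 0 c d] by (simp only: minus_zero)
  have n2: "Kp a' 0 c d = Kp a' 0 (-c) (-d)" for a'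
  proof -
    have "Kp a' 0 c d = Kp c d a' 0" by (rule Kp_swap)
    also have "\<dots> = Kp (-c) (-d) a' 0" by (rule Kp_neg1)
    also have "\<dots> = Kp a' 0 (-c) (-d)" by (rule Kp_swap)
    finally show ?thesis .
  qed
  obtain a1 c1 d1 where e: "Kp a 0 c d = Kp a1 0 c1 d1" "a1 > 0" "d1 > 0" "\<bar>a*d\<bar> = a1*d1"
  proof (cases "a > 0"; cases "d > 0")
    assume "a > 0" "d > 0" then show thesis using that[of a c d] by (simp add: abs_mult)
  next
    assume "a > 0" "\<not> d > 0" then show thesis using that[of a "-c" "-d"] n2[of a] assms by (simp add: abs_mult)
  next
    assume "\<not> a > 0" "d > 0" then show thesis using that[of "-a" c d] n1 assms by (simp add: abs_mult)
  next
    assume "\<not> a > 0" "\<not> d > 0" then show thesis using that[of "-a" "-c" "-d"] n1 n2[of "-a"] assms by (simp add: abs_mult)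
  qed
  then show ?thesis using Kp_tri[of a1 d1 c1] by simp
qed

lemma absstep: "(b::int) \<noteq> 0 \<Longrightarrow> d \<noteq> 0 \<Longrightarrow> \<bar>d\<bar> \<le> \<bar>b\<bar> \<Longrightarrow> \<bar>b + (if b*d>0 then -1 else 1)*d\<bar> = \<bar>b\<bar> - \<bar>d\<bar>"
proof -
  assume a: "b \<noteq> 0" "d \<noteq> 0" "\<bar>d\<bar> \<le> \<bar>b\<bar>"
  show ?thesis
  proof (cases "b > 0")
    case True
    then show ?thesis using a by (cases "d > 0") (auto simp: zero_less_mult_iff)
  next
    case False
    then show ?thesis using a by (cases "d > 0") (auto simp: zero_less_mult_iff)
  qed
qed

lemma Kp_card:
  "a*d - b*c \<noteq> 0 \<Longrightarrow> card (Kp a b c d) = nat \<bar>a*d - b*c\<bar>"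
proof (induction "nat \<bar>b\<bar> + nat \<bar>d\<bar>" arbitrary: a b c d rule: less_induct)
  case less
  show ?case
  proof (cases "b = 0")
    case True
    then show ?thesis using less.prems Kp_base[of a d c] by auto
  next
    case b: False
    show ?thesis
    proof (cases "d = 0")
      case True
      then have "card (Kp c 0 a b) = nat \<bar>c*b\<bar>" using less.prems b by (intro Kp_base) auto
      then show ?thesis using True Kp_swap[of a b c d] by (simp add: abs_mult mult.commute)
    next
      case d: False
      define k :: int where "k = (if b*d > 0 then -1 else 1)"
      show ?thesis
      proof (cases "\<bar>d\<bar> \<le> \<bar>b\<bar>")
        case True
        have ab: "\<bar>b + k*d\<bar> = \<bar>b\<bar> - \<bar>d\<bar>" using absstep[OF b d True] unfolding k_def .
        have lt: "nat \<bar>b + k*d\<bar> + nat \<bar>d\<bar> < nat \<bar>b\<bar> + nat \<bar>d\<bar>" using ab d by linarith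
        have de: "(a + k*c)*d - (b + k*d)*c = a*d - b*c" by (simp add: algebra_simps)
        have "card (Kp (a + k*c) (b + k*d) c d) = nat \<bar>(a + k*c)*d - (b + k*d)*c\<bar>"
          using less.prems de by (intro less.hyps[OF lt]) simp
        then show ?thesis using Kp_add1[of a b c d k] de by simp
      next
        case False
        have ab: "\<bar>d + k*b\<bar> = \<bar>d\<bar> - \<bar>b\<bar>" using absstep[OF d b] False unfolding k_def
          by (simp add: mult.commute)
        have lt: "nat \<bar>b\<bar> + nat \<bar>d + k*b\<bar> < nat \<bar>b\<bar> + nat \<bar>d\<bar>" using ab b by linarith
        have de: "a*(d + k*b) - b*(c + k*a) = a*d - b*c" by (simp add: algebra_simps)
        have "card (Kp a b (c + k*a) (d + k*b)) = nat \<bar>a*(d + k*b) - b*(c + k*a)\<bar>"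
          using less.prems de by (intro less.hyps[OF lt]) simp
        then show ?thesis using Kp_add2[of a b c d k] de by simp
      qed
    qed
  qed
qed



lemma mv_comp:
  fixes A :: "int^2^2" and x :: "real^2"
  shows "(map_matrix of_int A *v x - x) $ 1 = of_int (A$1$1 - 1) * x$1 + of_int (A$1$2) * x$2"
    and "(map_matrix of_int A *v x - x) $ 2 = of_int (A$2$1) * x$1 + of_int (A$2$2 - 1) * x$2"
  by (simp_all add: matrix_vector_mult_def sum_2 algebra_simps)

lemma mv_comp':
  fixes A :: "int^2^2" and x :: "real^2"
  shows "(map_matrix of_int A *v x) $ 1 - x $ 1 = of_int (A$1$1 - 1) * x$1 + of_int (A$1$2) * x$2"
    and "(map_matrix of_int A *v x) $ 2 - x $ 2 = of_int (A$2$1) * x$1 + of_int (A$2$2 - 1) * x$2"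
  using mv_comp[of A x] by simp_all

lemma det_char:
  fixes M :: "int^2^2" and z :: complex
  shows "det (mat z - map_matrix of_int M) = z^2 - of_int (trace M) * z + of_int (det M)"
  by (simp add: det_2 trace_def sum_2 mat_def power2_eq_square algebra_simps)

lemma det_sub1:
  fixes A :: "int^2^2"
  shows "(A$1$1 - 1) * (A$2$2 - 1) - A$1$2 * A$2$1 = det A - trace A + 1"
  by (simp add: det_2 trace_def sum_2 algebra_simps)

lemma trace_sq:
  fixes M :: "int^2^2"
  shows "trace (M ** M) = (trace M)^2 - 2 * det M"
  by (simp add: det_2 trace_def sum_2 matrix_matrix_mult_def power2_eq_square algebra_simps)

lemma matpow1: "matpow M (Suc 0) = M" by simp
lemma matpow2: "matpow M 2 = M ** M" by (simp add: numeral_2_eq_2)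



lemma torus_Kp:
  fixes M :: "int^2^2" and m :: nat
  defines "A \<equiv> matpow M m"
  shows "card (torus_fixed_points M m) = card (Kp (A$1$1 - 1) (A$1$2) (A$2$1) (A$2$2 - 1))"
proof -
  let ?g = "\<lambda>v::real^2. (v$1, v$2)"
  have inj: "inj ?g" by (auto simp: inj_def vec_eq_iff forall_2)
  have "?g ` torus_fixed_points M m = Kp (A$1$1 - 1) (A$1$2) (A$2$1) (A$2$2 - 1)"
  proof (intro equalityI subsetI)
    fix p assume "p \<in> ?g ` torus_fixed_points M m"
    then obtain v where "v \<in> torus_fixed_points M m" "p = ?g v" by auto
    then show "p \<in> Kp (A$1$1 - 1) (A$1$2) (A$2$1) (A$2$2 - 1)"
      unfolding torus_fixed_points_def Kp_def A_def by (auto simp: forall_2 mv_comp mv_comp')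
  next
    fix p assume p: "p \<in> Kp (A$1$1 - 1) (A$1$2) (A$2$1) (A$2$2 - 1)"
    obtain x y where xy: "p = (x, y)" by (cases p)
    let ?v = "vector [x, y] :: real^2"
    have "?v \<in> torus_fixed_points M m"
      using p unfolding torus_fixed_points_def Kp_def A_def xy by (auto simp: forall_2 mv_comp mv_comp')
    moreover have "p = ?g ?v" using xy by simp
    ultimately show "p \<in> ?g ` torus_fixed_points M m" by blast
  qed
  then show ?thesis using inj by (metis card_image inj_on_subset subset_UNIV)
qed

lemma fixcount_formula:
  fixes M :: "int^2^2"
  assumes "det (matpow M m) - trace (matpow M m) + 1 \<noteq> 0"
  shows "fixcount M m = nat \<bar>det (matpow M m) - trace (matpow M m) + 1\<bar>"
  using torus_Kp[of M m] Kp_card det_sub1[of "matpow M m"] assms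
  unfolding fixcount_def by simp



lemma no_sq4: "(t::int)^2 = s^2 + 4 \<Longrightarrow> s \<noteq> 0 \<Longrightarrow> False"
proof -
  assume e: "t^2 = s^2 + 4" and s: "s \<noteq> 0"
  define u where "u = \<bar>t\<bar>"
  define v where "v = \<bar>s\<bar>"
  have e': "u^2 = v^2 + 4" using e unfolding u_def v_def by simp
  have v1: "v \<ge> 1" using s unfolding v_def by simp
  have u0: "u \<ge> 0" unfolding u_def by simp
  have "u > v"
  proof (rule ccontr)
    assume "\<not> u > v" then have "u \<le> v" by simp
    then have "u^2 \<le> v^2" using u0 by (rule power_mono)
    then show False using e' by simp
  qed
  then have "u \<ge> v + 1" by simp
  then have "u^2 \<ge> (v+1)^2" using v1 by (intro power_mono) auto
  then have "2 * v + 1 \<le> 4" using e' by (simp add: power2_eq_square algebra_simps)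
  then have "v = 1" using v1 by simp
  then have u5: "u^2 = 5" using e' by simp
  show False
  proof (cases "u \<le> 2")
    case True then have "u^2 \<le> 2^2" using u0 by (rule power_mono)
    then show False using u5 by simp
  next
    case False then have "u \<ge> 3" by simp
    then have "u^2 \<ge> 3^2" by (intro power_mono) auto
    then show False using u5 by simp
  qed
qed

lemma arith_main:
  fixes D D' t t' :: int
  assumes D: "D = 1 \<or> D = -1" and D': "D' = 1 \<or> D' = -1"
    and h1: "D - t + 1 \<noteq> 0" "D + t + 1 \<noteq> 0" "D = 1 \<longrightarrow> t^2 \<ge> 4"
    and h1': "D' - t' + 1 \<noteq> 0" "D' + t' + 1 \<noteq> 0" "D' = 1 \<longrightarrow> t'^2 \<ge> 4"
    and a1: "nat \<bar>D - t + 1\<bar> = nat \<bar>D' - t' + 1\<bar>"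
    and a2: "nat \<bar>(D+1)^2 - t^2\<bar> = nat \<bar>(D'+1)^2 - t'^2\<bar>"
  shows "D' = D \<and> (t' = t \<or> (t' = -t \<and> D = -1))"
proof -
  have a1': "\<bar>D - t + 1\<bar> = \<bar>D' - t' + 1\<bar>" using a1 by simp
  have a2': "\<bar>(D+1)^2 - t^2\<bar> = \<bar>(D'+1)^2 - t'^2\<bar>" using a2 by simp
  consider "D = 1" "D' = 1" | "D = -1" "D' = -1" | "D = 1" "D' = -1" | "D = -1" "D' = 1"
    using D D' by blast
  then show ?thesis
  proof cases
    case 1
    then have "t^2 - 4 = t'^2 - 4" using a2' h1(3) h1'(3) by simp
    then have "t^2 = t'^2" by simp
    then have "t' = t \<or> t' = -t" by (metis power2_eq_iff)
    moreover have "t' = -t \<Longrightarrow> False"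
    proof -
      assume "t' = -t"
      then have "\<bar>2 - t\<bar> = \<bar>2 + t\<bar>" using a1' 1 by simp
      then have "t = 0" by (simp add: abs_if split: if_splits)
      then show False using h1(3) 1 by simp
    qed
    ultimately show ?thesis using 1 by blast
  next
    case 2
    then have "t^2 = t'^2" using a2' by simp
    then have "t' = t \<or> t' = -t" by (metis power2_eq_iff)
    then show ?thesis using 2 by blast
  next
    case 3
    then have "t^2 = t'^2 + 4" using a2' h1(3) by simp
    moreover have "t' \<noteq> 0" using h1'(1) 3 by simp
    ultimately show ?thesis using no_sq4 by blast
  next
    case 4
    then have "t'^2 = t^2 + 4" using a2' h1'(3) by simp
    moreover have "t \<noteq> 0" using h1(1) 4 by simp
    ultimately show ?thesis using no_sq4 by blast
  qed
qed


lemma hyp_facts: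
  fixes M :: "int^2^2"
  assumes "hyperbolic M"
  shows "det M - trace M + 1 \<noteq> 0" "det M + trace M + 1 \<noteq> 0" "det M = 1 \<longrightarrow> (trace M)^2 \<ge> 4"
proof -
  let ?t = "trace M" and ?D = "det M"
  have H: "\<And>z::complex. z^2 - of_int ?t * z + of_int ?D = 0 \<Longrightarrow> cmod z \<noteq> 1"
    using assms unfolding hyperbolic_def by (simp add: det_char)
  show "det M - trace M + 1 \<noteq> 0"
  proof
    assume "det M - trace M + 1 = 0"
    then have "(1::complex)^2 - of_int ?t * 1 + of_int ?D = 0"
      by (metis (mono_tags) add.commute diff_add_eq mult_1_right of_int_0 of_int_1 of_int_add of_int_diff power_one)
    then show False using H by fastforce
  qed
  show "det M + trace M + 1 \<noteq> 0"
  proof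
    assume e: "det M + trace M + 1 = 0"
    have "(-1::complex)^2 - of_int ?t * (-1) + of_int ?D = of_int (det M + trace M + 1)" by simp
    then have "(-1::complex)^2 - of_int ?t * (-1) + of_int ?D = 0" using e by simp
    then show False using H[of "-1"] by simp
  qed
  show "det M = 1 \<longrightarrow> (trace M)^2 \<ge> 4"
  proof (rule impI, rule ccontr)
    assume D: "det M = 1" and "\<not> (trace M)^2 \<ge> 4"
    then have lt: "(trace M)^2 < 4" by simp
    define r :: real where "r = of_int ?t"
    have lr: "r^2 < 4" using lt unfolding r_def by (metis of_int_less_iff of_int_numeral of_int_power)
    define s where "s = sqrt (4 - r^2)"
    have ss: "s * s = 4 - r^2" unfolding s_def using lr by simp
    define z where "z = Complex (r/2) (s/2)"
    have "z^2 - of_int ?t * z + of_int ?D = 0"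
      unfolding z_def using ss D
      by (simp add: complex_eq_iff power2_eq_square r_def[symmetric] field_simps)
    moreover have "cmod z = 1" unfolding z_def using ss
      by (simp add: complex_norm power2_eq_square field_simps)
    ultimately show False using H by blast
  qed
qed

lemma counts:
  fixes M :: "int^2^2"
  assumes "hyperbolic M"
  shows "fixcount M 1 = nat \<bar>det M - trace M + 1\<bar>"
    and "fixcount M 2 = nat \<bar>(det M + 1)^2 - (trace M)^2\<bar>"
proof -
  note h = hyp_facts[OF assms]
  show "fixcount M 1 = nat \<bar>det M - trace M + 1\<bar>"
    using fixcount_formula[of M "Suc 0"] h(1) by simp
  have e: "det (matpow M 2) - trace (matpow M 2) + 1 = (det M + 1)^2 - (trace M)^2"
    by (simp add: matpow2 det_mul trace_sq power2_eq_square algebra_simps)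
  have "(det M + 1)^2 - (trace M)^2 = (det M - trace M + 1) * (det M + trace M + 1)"
    by (simp add: power2_eq_square algebra_simps)
  then have "(det M + 1)^2 - (trace M)^2 \<noteq> 0" using h(1,2) by simp
  then show "fixcount M 2 = nat \<bar>(det M + 1)^2 - (trace M)^2\<bar>"
    using fixcount_formula[of M 2] e by simp
qed

theorem corollary16:
  fixes M M' :: "int^2^2"
  assumes "GL2Z M" and "GL2Z M'"
    and "hyperbolic M" and "hyperbolic M'"
    and "\<forall>m\<ge>1. fixcount M m = fixcount M' m"
  shows "zeta M = zeta M' \<and> det M' = det M \<and>
         (trace M' = trace M \<or> (trace M' = - trace M \<and> det M = -1))"
proof -
  have z: "zeta M = zeta M'"
    by (rule ext) (simp add: zeta_def assms(5))
  have a1: "nat \<bar>det M - trace M + 1\<bar> = nat \<bar>det M' - trace M' + 1\<bar>"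
    using assms(5) counts(1)[OF assms(3)] counts(1)[OF assms(4)] by auto
  have a2: "nat \<bar>(det M + 1)^2 - (trace M)^2\<bar> = nat \<bar>(det M' + 1)^2 - (trace M')^2\<bar>"
    using assms(5) counts(2)[OF assms(3)] counts(2)[OF assms(4)] by auto
  have "det M' = det M \<and> (trace M' = trace M \<or> (trace M' = - trace M \<and> det M = -1))"
    using arith_main[OF _ _ hyp_facts[OF assms(3)] hyp_facts[OF assms(4)] a1 a2]
      assms(1,2) unfolding GL2Z_def by blast
  then show ?thesis using z by blast
qed

end
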